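(* Let $(\lambda_i)_{i\ge1}$ and $(\mu_i)_{i\ge1}$ be elements of a commutative ring. Let $k\ge0$ and $0\le\delta\le k$ with $k-\delta$ even, and put $j=(k-\delta)/2$ and $M=(k+\delta)/2$. Then $$\sum_{P\in\mathcal{D}(k,0,\delta)}\mathrm{wt}(P)=\Big(\prod_{i=1}^{\delta}\lambda_i\Big)\sum_{\substack{m_1\le m_2\le\cdots\le m_j\le M\\ m_i\ge i\ (1\le i\le j)}}\ \prod_{i=1}^{j}\lambda_{m_i-i+1}\,\mu_{m_i-i+1},$$ where the sum on the right is over integer tuples $(m_1,\dots,m_j)$ and equals $1$ when $j=0$. Equivalently, the right-hand side is the nested sum $$\prod_{i=1}^{\delta}\lambda_i\sum_{m_j=j}^{M}\lambda_{m_j-j+1}\mu_{m_j-j+1}\Big[\cdots\Big[\sum_{m_2=2}^{m_3}\lambda_{m_2-1}\mu_{m_2-1}\Big[\sum_{m_1=1}^{m_2}\lambda_{m_1}\mu_{m_1}\Big]\Big]\cdots\Big].$$ In particular for $\delta=0$ (so $k$ even, $j=M=k/2$) the sum of weights of all paths in $\mathcal{D}(k,0,0)$ is the nested sum with all upper bounds $k/2$ and no prefactor.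
   Context: $\mathcal{D}(k,\delta_1,\delta_2)$ is the set of lattice paths of $k$ steps, each step $U=(1,1)$ or $D=(1,-1)$, from $(0,\delta_1)$ to $(k,\delta_2)$, never going below the $x$-axis. The weight $\mathrm{wt}(P)$ of a path is the product over its steps of $\lambda_i$ for each up step from height $i-1$ to height $i$ and $\mu_i$ for each down step from height $i$ to height $i-1$. *)

theory Defs
  imports Main
begin

text \<open>A lattice path is a list of steps: True = up step U=(1,1), False = down step D=(1,-1).
  path_ok h s e: starting at height h, following s never goes below the x-axis and ends at height e.\<close>
fun path_ok :: "nat \<Rightarrow> bool list \<Rightarrow> nat \<Rightarrow> bool" where
  "path_ok h [] e = (h = e)"
| "path_ok h (True # s) e = path_ok (Suc h) s e"
| "path_ok h (False # s) e = (0 < h \<and> path_ok (h - 1) s e)"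

definition Dpaths :: "nat \<Rightarrow> nat \<Rightarrow> nat \<Rightarrow> bool list set" where
  "Dpaths k d1 d2 = {s. length s = k \<and> path_ok d1 s d2}"

text \<open>Weight of a path started at height h: up step from i-1 to i contributes lam i,
  down step from i to i-1 contributes mu i.\<close>
fun pwt :: "(nat \<Rightarrow> 'a::comm_ring_1) \<Rightarrow> (nat \<Rightarrow> 'a) \<Rightarrow> nat \<Rightarrow> bool list \<Rightarrow> 'a" where
  "pwt lam mu h [] = 1"
| "pwt lam mu h (True # s) = lam (Suc h) * pwt lam mu (Suc h) s"
| "pwt lam mu h (False # s) = mu h * pwt lam mu (h - 1) s"

end

theory Submission
  imports Defs
begin

fun Sr :: "(nat \<Rightarrow> 'a::comm_ring_1) \<Rightarrow> (nat \<Rightarrow> 'a) \<Rightarrow> nat \<Rightarrow> nat \<Rightarrow> 'a" where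
  "Sr lam mu 0 M = 1"
| "Sr lam mu (Suc j) 0 = 0"
| "Sr lam mu (Suc j) (Suc M) = (if M < j then 0 else
     Sr lam mu (Suc j) M + lam (Suc M - j) * mu (Suc M - j) * Sr lam mu j (Suc M))"

definition T :: "nat \<Rightarrow> nat \<Rightarrow> nat list set" where
  "T j M = {ms :: nat list. length ms = j \<and> sorted ms
                 \<and> (\<forall>i<length ms. i + 1 \<le> ms ! i \<and> ms ! i \<le> M)}"

lemma T_finite: "finite (T j M)"
proof -
  have "T j M \<subseteq> {xs. set xs \<subseteq> {0..M} \<and> length xs = j}"
    unfolding T_def by (auto simp: in_set_conv_nth)
  moreover have "finite {xs. set xs \<subseteq> {0..M} \<and> length xs = j}"
    by (rule finite_lists_length_eq) simp
  ultimately show ?thesis by (rule finite_subset)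
qed

lemma T_0: "T 0 M = {[]}" unfolding T_def by auto

lemma T_Suc_0: "T (Suc j) 0 = {}" unfolding T_def by force

lemma T_empty: "M < j \<Longrightarrow> T (Suc j) (Suc M) = {}"
  unfolding T_def by (auto dest!: spec[of _ j])

lemma T_split:
  assumes "j \<le> M"
  shows "T (Suc j) (Suc M) = T (Suc j) M \<union> (\<lambda>xs. xs @ [Suc M]) ` T j (Suc M)"
proof (intro equalityI subsetI)
  fix ms assume ms: "ms \<in> T (Suc j) (Suc M)"
  then have len: "length ms = Suc j" and so: "sorted ms"
    and c: "\<forall>i<length ms. i + 1 \<le> ms ! i \<and> ms ! i \<le> Suc M" unfolding T_def by auto
  obtain xs x where ms_eq: "ms = xs @ [x]" using len
    by (metis length_Suc_conv_rev)
  have lx: "length xs = j" using len ms_eq by simp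
  show "ms \<in> T (Suc j) M \<union> (\<lambda>xs. xs @ [Suc M]) ` T j (Suc M)"
  proof (cases "x = Suc M")
    case True
    have "xs \<in> T j (Suc M)" unfolding T_def
    proof (intro CollectI conjI allI impI)
      show "length xs = j" by fact
      show "sorted xs" using so ms_eq by (simp add: sorted_append)
    next
      fix i assume "i < length xs"
      then show "i + 1 \<le> xs ! i" "xs ! i \<le> Suc M"
        using c ms_eq lx by (auto dest!: spec[of _ i] simp: nth_append)
    qed
    then show ?thesis using True ms_eq by auto
  next
    case False
    have xle: "x \<le> Suc M" using c ms_eq lx by (auto dest!: spec[of _ j])
    have "\<forall>y\<in>set xs. y \<le> x" using so ms_eq by (simp add: sorted_append)
    then have "\<forall>i<length xs. xs ! i \<le> x" by auto
    then have "ms \<in> T (Suc j) M" using ms c xle False ms_eq lx unfolding T_def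
      by (auto simp: nth_append split: if_splits)
    then show ?thesis by auto
  qed
next
  fix ms assume "ms \<in> T (Suc j) M \<union> (\<lambda>xs. xs @ [Suc M]) ` T j (Suc M)"
  then show "ms \<in> T (Suc j) (Suc M)"
  proof
    assume "ms \<in> T (Suc j) M" then show ?thesis unfolding T_def by force
  next
    assume "ms \<in> (\<lambda>xs. xs @ [Suc M]) ` T j (Suc M)"
    then obtain xs where ms: "ms = xs @ [Suc M]" and xs: "xs \<in> T j (Suc M)" by auto
    then have lx: "length xs = j" and so: "sorted xs"
      and c: "\<forall>i<length xs. i + 1 \<le> xs ! i \<and> xs ! i \<le> Suc M" unfolding T_def by auto
    have "\<forall>y\<in>set xs. y \<le> Suc M" using c by (auto simp: in_set_conv_nth)
    then have "sorted ms" using so ms by (simp add: sorted_append)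
    moreover have "\<forall>i<length ms. i + 1 \<le> ms ! i \<and> ms ! i \<le> Suc M"
      using c ms lx assms by (auto simp: nth_append less_Suc_eq)
    ultimately show ?thesis using ms lx unfolding T_def by auto
  qed
qed

lemma T_sum:
  "(\<Sum>ms\<in>T j M. \<Prod>i<j. lam (ms ! i - i) * mu (ms ! i - i)) = Sr lam mu j M"
proof (induction lam mu j M rule: Sr.induct)
  case (1 lam mu M)
  then show ?case by (simp add: T_0)
next
  case (2 lam mu j)
  then show ?case by (simp add: T_Suc_0)
next
  case (3 lam mu j M)
  show ?case
  proof (cases "M < j")
    case True
    then show ?thesis by (simp add: T_empty)
  next
    case False
    let ?g = "\<lambda>ms. \<Prod>i<Suc j. lam (ms ! i - i) * mu (ms ! i - i)"
    have disj: "T (Suc j) M \<inter> (\<lambda>xs. xs @ [Suc M]) ` T j (Suc M) = {}"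
      unfolding T_def by (auto dest!: spec[of _ j])
    have inj: "inj_on (\<lambda>xs. xs @ [Suc M]) (T j (Suc M))" by (simp add: inj_on_def)
    have "(\<Sum>ms\<in>T (Suc j) (Suc M). ?g ms) =
        (\<Sum>ms\<in>T (Suc j) M. ?g ms) + (\<Sum>ms\<in>(\<lambda>xs. xs @ [Suc M]) ` T j (Suc M). ?g ms)"
      using False by (simp add: T_split sum.union_disjoint T_finite disj)
    also have "(\<Sum>ms\<in>(\<lambda>xs. xs @ [Suc M]) ` T j (Suc M). ?g ms) =
        (\<Sum>xs\<in>T j (Suc M). ?g (xs @ [Suc M]))"
      using inj by (simp add: sum.reindex)
    also have "\<dots> = (\<Sum>xs\<in>T j (Suc M). lam (Suc M - j) * mu (Suc M - j) *
                  (\<Prod>i<j. lam (xs ! i - i) * mu (xs ! i - i)))"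
    proof (rule sum.cong)
      fix xs assume "xs \<in> T j (Suc M)"
      then have lx: "length xs = j" unfolding T_def by auto
      have "(\<Prod>i<j. lam ((xs @ [Suc M]) ! i - i) * mu ((xs @ [Suc M]) ! i - i)) =
            (\<Prod>i<j. lam (xs ! i - i) * mu (xs ! i - i))"
        by (rule prod.cong) (auto simp: nth_append lx)
      then show "?g (xs @ [Suc M]) = lam (Suc M - j) * mu (Suc M - j) *
                  (\<Prod>i<j. lam (xs ! i - i) * mu (xs ! i - i))"
        by (simp add: lx nth_append mult.commute)
    qed simp
    also have "\<dots> = lam (Suc M - j) * mu (Suc M - j) * Sr lam mu j (Suc M)"
      using "3.IH"(2) False by (simp add: sum_distrib_left[symmetric])
    finally show ?thesis using "3.IH"(1) False by simp
  qed
qed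


lemma path_ok_snoc_T: "path_ok h (s @ [True]) e \<longleftrightarrow> 0 < e \<and> path_ok h s (e - 1)"
  by (induction s arbitrary: h) (auto simp: path_ok.simps split: bool.splits, (case_tac a; auto)+)
lemma path_ok_snoc_F: "path_ok h (s @ [False]) e \<longleftrightarrow> path_ok h s (Suc e)"
  by (induction s arbitrary: h) (auto simp: path_ok.simps split: bool.splits, (case_tac a; auto)+)
lemma pwt_snoc_T: "path_ok h s e \<Longrightarrow> pwt lam mu h (s @ [True]) = pwt lam mu h s * lam (Suc e)"
  apply (induction s arbitrary: h)
   apply simp
  subgoal for a s h by (cases a) (auto simp: mult.assoc)
  done
lemma pwt_snoc_F: "path_ok h s e \<Longrightarrow> pwt lam mu h (s @ [False]) = pwt lam mu h s * mu e"
  apply (induction s arbitrary: h)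
   apply simp
  subgoal for a s h by (cases a) (auto simp: mult.assoc)
  done
lemma path_ok_bound: "path_ok h s e \<Longrightarrow> e \<le> h + length s"
  apply (induction s arbitrary: h)
   apply simp
  subgoal for a s h by (cases a) fastforce+
  done

lemma Dpaths_finite: "finite (Dpaths k h d)"
proof -
  have "Dpaths k h d \<subseteq> {xs. set xs \<subseteq> UNIV \<and> length xs = k}" unfolding Dpaths_def by auto
  moreover have "finite {xs::bool list. set xs \<subseteq> UNIV \<and> length xs = k}"
    by (rule finite_lists_length_eq) simp
  ultimately show ?thesis by (rule finite_subset)
qed

lemma Dpaths_Suc: "Dpaths (Suc k) h d =
   (if 0 < d then (\<lambda>s. s @ [True]) ` Dpaths k h (d - 1) else {}) \<union> (\<lambda>s. s @ [False]) ` Dpaths k h (Suc d)"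
proof (intro equalityI subsetI)
  fix s assume "s \<in> Dpaths (Suc k) h d"
  then have l: "length s = Suc k" and p: "path_ok h s d" unfolding Dpaths_def by auto
  obtain xs x where s: "s = xs @ [x]" using l by (metis length_Suc_conv_rev)
  show "s \<in> (if 0 < d then (\<lambda>s. s @ [True]) ` Dpaths k h (d - 1) else {}) \<union> (\<lambda>s. s @ [False]) ` Dpaths k h (Suc d)"
    using l p unfolding s Dpaths_def by (cases x) (auto simp: path_ok_snoc_T path_ok_snoc_F)
next
  fix s assume "s \<in> (if 0 < d then (\<lambda>s. s @ [True]) ` Dpaths k h (d - 1) else {}) \<union> (\<lambda>s. s @ [False]) ` Dpaths k h (Suc d)"
  then show "s \<in> Dpaths (Suc k) h d"
    unfolding Dpaths_def by (auto simp: path_ok_snoc_T path_ok_snoc_F split: if_splits)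
qed

definition F where "F lam mu k d = (\<Sum>P\<in>Dpaths k 0 d. pwt lam mu 0 P)"

lemma F_Suc: "F lam mu (Suc k) d = (if 0 < d then F lam mu k (d - 1) * lam d else 0) + F lam mu k (Suc d) * mu (Suc d)"
proof -
  have disj: "(if 0 < d then (\<lambda>s. s @ [True]) ` Dpaths k 0 (d - 1) else {}) \<inter> (\<lambda>s. s @ [False]) ` Dpaths k 0 (Suc d) = {}"
    by auto
  have "F lam mu (Suc k) d = (\<Sum>P\<in>(if 0 < d then (\<lambda>s. s @ [True]) ` Dpaths k 0 (d - 1) else {}). pwt lam mu 0 P)
     + (\<Sum>P\<in>(\<lambda>s. s @ [False]) ` Dpaths k 0 (Suc d). pwt lam mu 0 P)"
    unfolding F_def Dpaths_Suc by (rule sum.union_disjoint) (auto simp: Dpaths_finite)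
  also have "(\<Sum>P\<in>(\<lambda>s. s @ [False]) ` Dpaths k 0 (Suc d). pwt lam mu 0 P) = F lam mu k (Suc d) * mu (Suc d)"
    unfolding F_def by (subst sum.reindex) (auto simp: inj_on_def sum_distrib_right Dpaths_def pwt_snoc_F intro!: sum.cong)
  also have "(\<Sum>P\<in>(if 0 < d then (\<lambda>s. s @ [True]) ` Dpaths k 0 (d - 1) else {}). pwt lam mu 0 P)
      = (if 0 < d then F lam mu k (d - 1) * lam d else 0)"
  proof (cases "0 < d")
    case True
    then show ?thesis
    unfolding F_def by (simp, subst sum.reindex) (auto simp: inj_on_def sum_distrib_right Dpaths_def pwt_snoc_T intro!: sum.cong)
  qed simp
  finally show ?thesis by simp
qed

lemma F_zero: assumes "k < d" shows "F lam mu k d = 0"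
proof -
  have "Dpaths k 0 d = {}" unfolding Dpaths_def using path_ok_bound assms by fastforce
  then show ?thesis unfolding F_def by simp
qed

lemma Sr_zero: "Sr lam mu (Suc j) j = 0"
  by (cases j) auto

lemma F_main: "n = 2 * j + d \<Longrightarrow> F lam mu n d = (\<Prod>i=1..d. lam i) * Sr lam mu j (j + d)"
proof (induction n arbitrary: j d)
  case 0
  have "Dpaths 0 0 0 = {[]}" unfolding Dpaths_def by auto
  then show ?case using 0 by (simp add: F_def)
next
  case (Suc m)
  show ?case
  proof (cases d)
    case 0
    then obtain j' where j: "j = Suc j'" using Suc.prems by (cases j) auto
    have "F lam mu m 1 = lam 1 * Sr lam mu j' (j' + 1)" using Suc.IH[of j' 1] Suc.prems 0 j by simp
    then show ?thesis using 0 j by (simp add: F_Suc Sr_zero mult.commute)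
  next
    case (Suc d')
    show ?thesis
    proof (cases j)
      case 0
      have "F lam mu m d' = (\<Prod>i=1..d'. lam i)" using Suc.IH[of 0 d'] Suc.prems \<open>d = Suc d'\<close> 0 by simp
      moreover have "F lam mu m (Suc d) = 0" using Suc.prems 0 by (intro F_zero) simp
      ultimately show ?thesis using \<open>d = Suc d'\<close> 0 by (simp add: F_Suc)
    next
      case (Suc j')
      have a: "F lam mu m d' = (\<Prod>i=1..d'. lam i) * Sr lam mu (Suc j') (Suc j' + d')"
        using Suc.IH[of "Suc j'" d'] \<open>Suc m = 2 * j + d\<close> \<open>d = Suc d'\<close> Suc by simp
      have b: "F lam mu m (Suc d) = (\<Prod>i=1..Suc (Suc d'). lam i) * Sr lam mu j' (j' + Suc (Suc d'))"
        using Suc.IH[of j' "Suc (Suc d')"] \<open>Suc m = 2 * j + d\<close> \<open>d = Suc d'\<close> Suc by simp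
      show ?thesis using a b \<open>d = Suc d'\<close> Suc
        by (simp add: F_Suc algebra_simps)
    qed
  qed
qed

theorem mainTheorem5:
  fixes lam mu :: "nat \<Rightarrow> 'a::comm_ring_1" and k \<delta> :: nat
  assumes "\<delta> \<le> k" and "even (k - \<delta>)"
  shows "(\<Sum>P\<in>Dpaths k 0 \<delta>. pwt lam mu 0 P) =
    (\<Prod>i=1..\<delta>. lam i) *
    (\<Sum>ms\<in>{ms :: nat list. length ms = (k - \<delta>) div 2 \<and> sorted ms
                 \<and> (\<forall>i<length ms. i + 1 \<le> ms ! i \<and> ms ! i \<le> (k + \<delta>) div 2)}.
       \<Prod>i<(k - \<delta>) div 2. lam (ms ! i - i) * mu (ms ! i - i))"
proof -
  define j where "j = (k - \<delta>) div 2"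
  have k: "k = 2 * j + \<delta>" using assms unfolding j_def by auto
  have M: "(k + \<delta>) div 2 = j + \<delta>" using k by simp
  have "(\<Sum>P\<in>Dpaths k 0 \<delta>. pwt lam mu 0 P) = F lam mu k \<delta>" by (simp add: F_def)
  also have "\<dots> = (\<Prod>i=1..\<delta>. lam i) * Sr lam mu j (j + \<delta>)" by (rule F_main[OF k])
  also have "Sr lam mu j (j + \<delta>) = (\<Sum>ms\<in>T j (j + \<delta>). \<Prod>i<j. lam (ms ! i - i) * mu (ms ! i - i))"
    by (rule T_sum[symmetric])
  finally show ?thesis unfolding M j_def[symmetric] T_def .
qed

end
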